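(* Let $\mathcal C$ be an additive category and let $\mathcal F$, $\mathcal G$ and $\bar\cdot$ be additive endofunctors of $\mathcal C$, where $\bar\cdot$ is the identity on objects and an involution on morphisms. Let $f$ be a natural transformation from $\mathcal F$ to $\mathcal G$, and let $\partial:\mathrm{Hom}_{\mathcal C}(A,B)\to\mathrm{Hom}_{\mathcal C}(\mathcal G A,\mathcal F B)$ be an operation on Hom-sets such that: (1) $\partial$ is $\mathbb{Z}$-linear: $\partial(\phi-\psi)=\partial\phi-\partial\psi$ for $\phi,\psi\in\mathrm{Hom}(A,B)$; (2) for $\phi\in\mathrm{Hom}(A,B)$: $\mathcal G(\phi-\bar\phi)=f_B\,\partial\phi$ and $\mathcal F(\phi-\bar\phi)=\partial\phi\,f_A$; (3) for composable $\phi\in\mathrm{Hom}(A,B)$, $\psi\in\mathrm{Hom}(B,C)$: $\partial(\psi\phi)=\partial\psi\,\mathcal G\phi+\mathcal F\bar\psi\,\partial\phi=\partial\psi\,\mathcal G\bar\phi+\mathcal F\psi\,\partial\phi$. Let $C$ be a chain complex over $\mathcal C$ with differential $d$; then $f$ gives a chain map $f_C:\mathcal F C\to\mathcal G C$. Let $\bar C$ be the chain complex obtained by applying $\bar\cdot$ to the differential of $C$ (same objects). Then the mapping cones $\mathrm{Cone}(f_C)$ and $\mathrm{Cone}(f_{\bar C})$ are isomorphic chain complexes.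
   Context: Convention for mapping cones: for a chain map $g:X\to Y$ (differentials of degree $+1$), $\mathrm{Cone}(g)=X[-1]\oplus Y$ with differential $\begin{pmatrix} d_X & 0\\ g\,\varepsilon_X & d_Y\end{pmatrix}$, where $\varepsilon_X$ is the identity in even homological degrees and minus the identity in odd degrees. *)

theory Defs
  imports Main
begin

record ('o, 'm) addcat =
  obj   :: "'o set"
  mor   :: "'m set"
  src   :: "'m \<Rightarrow> 'o"
  tgt   :: "'m \<Rightarrow> 'o"
  comp  :: "'m \<Rightarrow> 'm \<Rightarrow> 'm"      (* comp g f = g after f *)
  ident :: "'o \<Rightarrow> 'm"
  plus  :: "'m \<Rightarrow> 'm \<Rightarrow> 'm"
  negm  :: "'m \<Rightarrow> 'm"
  zer   :: "'o \<Rightarrow> 'o \<Rightarrow> 'm"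
  bsum  :: "'o \<Rightarrow> 'o \<Rightarrow> 'o"
  inj1  :: "'o \<Rightarrow> 'o \<Rightarrow> 'm"
  inj2  :: "'o \<Rightarrow> 'o \<Rightarrow> 'm"
  prj1  :: "'o \<Rightarrow> 'o \<Rightarrow> 'm"
  prj2  :: "'o \<Rightarrow> 'o \<Rightarrow> 'm"

definition hom :: "('o, 'm) addcat \<Rightarrow> 'o \<Rightarrow> 'o \<Rightarrow> 'm set" where
  "hom C A B = {m \<in> mor C. src C m = A \<and> tgt C m = B}"

definition subm :: "('o, 'm) addcat \<Rightarrow> 'm \<Rightarrow> 'm \<Rightarrow> 'm" where
  "subm C f g = plus C f (negm C g)"

definition additive_category :: "('o, 'm) addcat \<Rightarrow> bool" where
  "additive_category C \<longleftrightarrow>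
     \<comment> \<open>category\<close>
     (\<forall>m\<in>mor C. src C m \<in> obj C \<and> tgt C m \<in> obj C)
   \<and> (\<forall>A\<in>obj C. ident C A \<in> hom C A A)
   \<and> (\<forall>f\<in>mor C. \<forall>g\<in>mor C. tgt C f = src C g \<longrightarrow>
        comp C g f \<in> hom C (src C f) (tgt C g))
   \<and> (\<forall>f\<in>mor C. \<forall>g\<in>mor C. \<forall>h\<in>mor C. tgt C f = src C g \<and> tgt C g = src C h \<longrightarrow>
        comp C h (comp C g f) = comp C (comp C h g) f)
   \<and> (\<forall>f\<in>mor C. comp C (ident C (tgt C f)) f = f \<and> comp C f (ident C (src C f)) = f)
     \<comment> \<open>preadditive: abelian group structure on Hom-sets, bilinear composition\<close>
   \<and> (\<forall>A\<in>obj C. \<forall>B\<in>obj C. zer C A B \<in> hom C A B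
        \<and> (\<forall>f\<in>hom C A B. negm C f \<in> hom C A B
             \<and> plus C (zer C A B) f = f \<and> plus C f (negm C f) = zer C A B)
        \<and> (\<forall>f\<in>hom C A B. \<forall>g\<in>hom C A B. plus C f g \<in> hom C A B \<and> plus C f g = plus C g f)
        \<and> (\<forall>f\<in>hom C A B. \<forall>g\<in>hom C A B. \<forall>h\<in>hom C A B.
             plus C (plus C f g) h = plus C f (plus C g h)))
   \<and> (\<forall>A\<in>obj C. \<forall>B\<in>obj C. \<forall>D\<in>obj C. \<forall>f\<in>hom C A B. \<forall>g\<in>hom C A B. \<forall>h\<in>hom C B D.
        comp C h (plus C f g) = plus C (comp C h f) (comp C h g))
   \<and> (\<forall>A\<in>obj C. \<forall>B\<in>obj C. \<forall>D\<in>obj C. \<forall>h\<in>hom C A B. \<forall>f\<in>hom C B D. \<forall>g\<in>hom C B D.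
        comp C (plus C f g) h = plus C (comp C f h) (comp C g h))
     \<comment> \<open>zero object\<close>
   \<and> (\<exists>Z\<in>obj C. ident C Z = zer C Z Z)
     \<comment> \<open>binary biproducts (chosen)\<close>
   \<and> (\<forall>A\<in>obj C. \<forall>B\<in>obj C. bsum C A B \<in> obj C
        \<and> inj1 C A B \<in> hom C A (bsum C A B) \<and> inj2 C A B \<in> hom C B (bsum C A B)
        \<and> prj1 C A B \<in> hom C (bsum C A B) A \<and> prj2 C A B \<in> hom C (bsum C A B) B
        \<and> comp C (prj1 C A B) (inj1 C A B) = ident C A
        \<and> comp C (prj2 C A B) (inj2 C A B) = ident C B
        \<and> comp C (prj1 C A B) (inj2 C A B) = zer C B A
        \<and> comp C (prj2 C A B) (inj1 C A B) = zer C A B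
        \<and> plus C (comp C (inj1 C A B) (prj1 C A B)) (comp C (inj2 C A B) (prj2 C A B))
            = ident C (bsum C A B))"

definition additive_functor ::
  "('o, 'm) addcat \<Rightarrow> ('o \<Rightarrow> 'o) \<Rightarrow> ('m \<Rightarrow> 'm) \<Rightarrow> bool" where
  "additive_functor C Fo Fm \<longleftrightarrow>
     (\<forall>A\<in>obj C. Fo A \<in> obj C)
   \<and> (\<forall>f\<in>mor C. Fm f \<in> hom C (Fo (src C f)) (Fo (tgt C f)))
   \<and> (\<forall>A\<in>obj C. Fm (ident C A) = ident C (Fo A))
   \<and> (\<forall>f\<in>mor C. \<forall>g\<in>mor C. tgt C f = src C g \<longrightarrow> Fm (comp C g f) = comp C (Fm g) (Fm f))
   \<and> (\<forall>A\<in>obj C. \<forall>B\<in>obj C. \<forall>f\<in>hom C A B. \<forall>g\<in>hom C A B.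
        Fm (plus C f g) = plus C (Fm f) (Fm g))"

definition involutive_bar :: "('o, 'm) addcat \<Rightarrow> ('m \<Rightarrow> 'm) \<Rightarrow> bool" where
  "involutive_bar C bar \<longleftrightarrow>
     additive_functor C (\<lambda>A. A) bar \<and> (\<forall>f\<in>mor C. bar (bar f) = f)"

definition nat_trans ::
  "('o, 'm) addcat \<Rightarrow> ('o \<Rightarrow> 'o) \<Rightarrow> ('m \<Rightarrow> 'm) \<Rightarrow> ('o \<Rightarrow> 'o) \<Rightarrow> ('m \<Rightarrow> 'm)
     \<Rightarrow> ('o \<Rightarrow> 'm) \<Rightarrow> bool" where
  "nat_trans C Fo Fm Go Gm f \<longleftrightarrow>
     (\<forall>A\<in>obj C. f A \<in> hom C (Fo A) (Go A))
   \<and> (\<forall>\<phi>\<in>mor C. comp C (Gm \<phi>) (f (src C \<phi>)) = comp C (f (tgt C \<phi>)) (Fm \<phi>))"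

definition boundary_op ::
  "('o, 'm) addcat \<Rightarrow> ('o \<Rightarrow> 'o) \<Rightarrow> ('m \<Rightarrow> 'm) \<Rightarrow> ('o \<Rightarrow> 'o) \<Rightarrow> ('m \<Rightarrow> 'm)
     \<Rightarrow> ('m \<Rightarrow> 'm) \<Rightarrow> ('o \<Rightarrow> 'm) \<Rightarrow> ('m \<Rightarrow> 'm) \<Rightarrow> bool" where
  "boundary_op C Fo Fm Go Gm bar f bd \<longleftrightarrow>
     (\<forall>\<phi>\<in>mor C. bd \<phi> \<in> hom C (Go (src C \<phi>)) (Fo (tgt C \<phi>)))
   \<and> (\<forall>A\<in>obj C. \<forall>B\<in>obj C. \<forall>\<phi>\<in>hom C A B. \<forall>\<psi>\<in>hom C A B.
        bd (subm C \<phi> \<psi>) = subm C (bd \<phi>) (bd \<psi>))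
   \<and> (\<forall>\<phi>\<in>mor C.
        Gm (subm C \<phi> (bar \<phi>)) = comp C (f (tgt C \<phi>)) (bd \<phi>)
      \<and> Fm (subm C \<phi> (bar \<phi>)) = comp C (bd \<phi>) (f (src C \<phi>)))
   \<and> (\<forall>\<phi>\<in>mor C. \<forall>\<psi>\<in>mor C. tgt C \<phi> = src C \<psi> \<longrightarrow>
        bd (comp C \<psi> \<phi>) = plus C (comp C (bd \<psi>) (Gm \<phi>)) (comp C (Fm (bar \<psi>)) (bd \<phi>))
      \<and> bd (comp C \<psi> \<phi>) = plus C (comp C (bd \<psi>) (Gm (bar \<phi>))) (comp C (Fm \<psi>) (bd \<phi>)))"

type_synonym ('o, 'm) cplx = "(int \<Rightarrow> 'o) \<times> (int \<Rightarrow> 'm)"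

definition chain_complex :: "('o, 'm) addcat \<Rightarrow> ('o, 'm) cplx \<Rightarrow> bool" where
  "chain_complex C X \<longleftrightarrow>
     (\<forall>n. fst X n \<in> obj C \<and> snd X n \<in> hom C (fst X n) (fst X (n + 1))
        \<and> comp C (snd X (n + 1)) (snd X n) = zer C (fst X n) (fst X (n + 2)))"

definition chain_map :: "('o, 'm) addcat \<Rightarrow> ('o, 'm) cplx \<Rightarrow> ('o, 'm) cplx \<Rightarrow> (int \<Rightarrow> 'm) \<Rightarrow> bool" where
  "chain_map C X Y g \<longleftrightarrow>
     (\<forall>n. g n \<in> hom C (fst X n) (fst Y n)
        \<and> comp C (snd Y n) (g n) = comp C (g (n + 1)) (snd X n))"

definition cplx_iso :: "('o, 'm) addcat \<Rightarrow> ('o, 'm) cplx \<Rightarrow> ('o, 'm) cplx \<Rightarrow> bool" where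
  "cplx_iso C X Y \<longleftrightarrow>
     (\<exists>g h. chain_map C X Y g \<and> chain_map C Y X h
        \<and> (\<forall>n. comp C (h n) (g n) = ident C (fst X n) \<and> comp C (g n) (h n) = ident C (fst Y n)))"

text \<open>Morphism \<open>A1 \<oplus> A2 \<rightarrow> B1 \<oplus> B2\<close> given by the matrix \<open>(m11 m12; m21 m22)\<close>, \<open>mij : Aj \<rightarrow> Bi\<close>.\<close>
definition bmat :: "('o, 'm) addcat \<Rightarrow> 'o \<Rightarrow> 'o \<Rightarrow> 'o \<Rightarrow> 'o \<Rightarrow> 'm \<Rightarrow> 'm \<Rightarrow> 'm \<Rightarrow> 'm \<Rightarrow> 'm" where
  "bmat C A1 A2 B1 B2 m11 m12 m21 m22 =
     plus C
       (plus C (comp C (inj1 C B1 B2) (comp C m11 (prj1 C A1 A2)))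
               (comp C (inj1 C B1 B2) (comp C m12 (prj2 C A1 A2))))
       (plus C (comp C (inj2 C B1 B2) (comp C m21 (prj1 C A1 A2)))
               (comp C (inj2 C B1 B2) (comp C m22 (prj2 C A1 A2))))"

definition eps :: "('o, 'm) addcat \<Rightarrow> int \<Rightarrow> 'o \<Rightarrow> 'm" where
  "eps C k A = (if even k then ident C A else negm C (ident C A))"

text \<open>\<open>Cone(g) = X[-1] \<oplus> Y\<close>, with \<open>X[-1]^n = X^(n+1)\<close> and differential
  \<open>(d_X 0; g \<epsilon>_X d_Y)\<close>.\<close>
definition cone :: "('o, 'm) addcat \<Rightarrow> ('o, 'm) cplx \<Rightarrow> ('o, 'm) cplx \<Rightarrow> (int \<Rightarrow> 'm) \<Rightarrow> ('o, 'm) cplx" where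
  "cone C X Y g =
     (\<lambda>n. bsum C (fst X (n + 1)) (fst Y n),
      \<lambda>n. bmat C (fst X (n + 1)) (fst Y n) (fst X (n + 2)) (fst Y (n + 1))
             (snd X (n + 1))
             (zer C (fst Y n) (fst X (n + 2)))
             (comp C (g (n + 1)) (eps C (n + 1) (fst X (n + 1))))
             (snd Y n))"

definition fun_cplx :: "('o \<Rightarrow> 'o) \<Rightarrow> ('m \<Rightarrow> 'm) \<Rightarrow> ('o, 'm) cplx \<Rightarrow> ('o, 'm) cplx" where
  "fun_cplx Fo Fm X = (\<lambda>n. Fo (fst X n), \<lambda>n. Fm (snd X n))"

definition bar_cplx :: "('m \<Rightarrow> 'm) \<Rightarrow> ('o, 'm) cplx \<Rightarrow> ('o, 'm) cplx" where
  "bar_cplx bar X = (fst X, \<lambda>n. bar (snd X n))"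

definition nt_cplx :: "('o \<Rightarrow> 'm) \<Rightarrow> ('o, 'm) cplx \<Rightarrow> int \<Rightarrow> 'm" where
  "nt_cplx f X = (\<lambda>n. f (fst X n))"

end

theory Submission
  imports Defs
begin



lemma in_hom: "f \<in> hom C A B \<longleftrightarrow> f \<in> mor C \<and> src C f = A \<and> tgt C f = B"
  by (simp add: hom_def)

locale AC =
  fixes C :: "('o,'m) addcat"
  assumes ac: "additive_category C"
begin

lemmas acd = ac[unfolded additive_category_def]
lemmas c1 = acd[THEN conjunct1]
lemmas c2 = acd[THEN conjunct2, THEN conjunct1]
lemmas c3 = acd[THEN conjunct2, THEN conjunct2, THEN conjunct1]
lemmas c4 = acd[THEN conjunct2, THEN conjunct2, THEN conjunct2, THEN conjunct1]
lemmas c5 = acd[THEN conjunct2, THEN conjunct2, THEN conjunct2, THEN conjunct2, THEN conjunct1]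
lemmas c6 = acd[THEN conjunct2, THEN conjunct2, THEN conjunct2, THEN conjunct2, THEN conjunct2, THEN conjunct1]
lemmas c7 = acd[THEN conjunct2, THEN conjunct2, THEN conjunct2, THEN conjunct2, THEN conjunct2, THEN conjunct2, THEN conjunct1]
lemmas c8 = acd[THEN conjunct2, THEN conjunct2, THEN conjunct2, THEN conjunct2, THEN conjunct2, THEN conjunct2, THEN conjunct2, THEN conjunct1]
lemmas c10 = acd[THEN conjunct2, THEN conjunct2, THEN conjunct2, THEN conjunct2, THEN conjunct2, THEN conjunct2, THEN conjunct2, THEN conjunct2, THEN conjunct2]

lemma mor_src[simp]: "f \<in> mor C \<Longrightarrow> src C f \<in> obj C" using c1 by blast
lemma mor_tgt[simp]: "f \<in> mor C \<Longrightarrow> tgt C f \<in> obj C" using c1 by blast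

lemma id_ty[simp]: "A \<in> obj C \<Longrightarrow> ident C A \<in> mor C"
  "A \<in> obj C \<Longrightarrow> src C (ident C A) = A" "A \<in> obj C \<Longrightarrow> tgt C (ident C A) = A"
  using c2 by (auto simp: in_hom)

lemma comp_ty[simp]:
  "\<lbrakk>f \<in> mor C; g \<in> mor C; tgt C f = src C g\<rbrakk> \<Longrightarrow> comp C g f \<in> mor C"
  "\<lbrakk>f \<in> mor C; g \<in> mor C; tgt C f = src C g\<rbrakk> \<Longrightarrow> src C (comp C g f) = src C f"
  "\<lbrakk>f \<in> mor C; g \<in> mor C; tgt C f = src C g\<rbrakk> \<Longrightarrow> tgt C (comp C g f) = tgt C g"
  using c3 by (auto simp: in_hom)

lemma assoc[simp]: "\<lbrakk>f \<in> mor C; g \<in> mor C; h \<in> mor C; tgt C f = src C g; tgt C g = src C h\<rbrakk>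
   \<Longrightarrow> comp C (comp C h g) f = comp C h (comp C g f)"
  using c4 by metis

lemma id_left[simp]: "\<lbrakk>f \<in> mor C; tgt C f = B\<rbrakk> \<Longrightarrow> comp C (ident C B) f = f"
  using c5 by blast
lemma id_right[simp]: "\<lbrakk>f \<in> mor C; src C f = A\<rbrakk> \<Longrightarrow> comp C f (ident C A) = f"
  using c5 by blast

lemma hom_self: "f \<in> mor C \<Longrightarrow> f \<in> hom C (src C f) (tgt C f)" by (simp add: in_hom)

lemma zer_ty[simp]: "A \<in> obj C \<Longrightarrow> B \<in> obj C \<Longrightarrow> zer C A B \<in> mor C"
  "A \<in> obj C \<Longrightarrow> B \<in> obj C \<Longrightarrow> src C (zer C A B) = A"
  "A \<in> obj C \<Longrightarrow> B \<in> obj C \<Longrightarrow> tgt C (zer C A B) = B"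
  using c6 by (auto simp: in_hom)

lemma h_neg: "A \<in> obj C \<Longrightarrow> B \<in> obj C \<Longrightarrow> f \<in> hom C A B \<Longrightarrow> negm C f \<in> hom C A B"
  using c6 by blast
lemma h_zp: "A \<in> obj C \<Longrightarrow> B \<in> obj C \<Longrightarrow> f \<in> hom C A B \<Longrightarrow> plus C (zer C A B) f = f"
  using c6 by blast
lemma h_pn: "A \<in> obj C \<Longrightarrow> B \<in> obj C \<Longrightarrow> f \<in> hom C A B \<Longrightarrow> plus C f (negm C f) = zer C A B"
  using c6 by blast
lemma h_plus: "A \<in> obj C \<Longrightarrow> B \<in> obj C \<Longrightarrow> f \<in> hom C A B \<Longrightarrow> g \<in> hom C A B \<Longrightarrow> plus C f g \<in> hom C A B"
  using c6 by blast
lemma h_comm: "A \<in> obj C \<Longrightarrow> B \<in> obj C \<Longrightarrow> f \<in> hom C A B \<Longrightarrow> g \<in> hom C A B \<Longrightarrow> plus C f g = plus C g f"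
  using c6 by blast
lemma h_assoc: "A \<in> obj C \<Longrightarrow> B \<in> obj C \<Longrightarrow> f \<in> hom C A B \<Longrightarrow> g \<in> hom C A B \<Longrightarrow> h \<in> hom C A B \<Longrightarrow>
   plus C (plus C f g) h = plus C f (plus C g h)"
  using c6 by blast

lemma neg_ty[simp]: "f \<in> mor C \<Longrightarrow> negm C f \<in> mor C"
  "f \<in> mor C \<Longrightarrow> src C (negm C f) = src C f"
  "f \<in> mor C \<Longrightarrow> tgt C (negm C f) = tgt C f"
  using h_neg[OF mor_src mor_tgt hom_self] by (auto simp: in_hom)

lemma plus_ty[simp]:
  assumes "f \<in> mor C" "g \<in> mor C" "src C g = src C f" "tgt C g = tgt C f"
  shows "plus C f g \<in> mor C" "src C (plus C f g) = src C f" "tgt C (plus C f g) = tgt C f"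
  using h_plus[OF mor_src[OF assms(1)] mor_tgt[OF assms(1)] hom_self[OF assms(1)], of g] assms
  by (auto simp: in_hom)

lemma plus_comm:
  assumes "f \<in> mor C" "g \<in> mor C" "src C g = src C f" "tgt C g = tgt C f"
  shows "plus C f g = plus C g f"
  using h_comm[OF mor_src[OF assms(1)] mor_tgt[OF assms(1)] hom_self[OF assms(1)], of g] assms
  by (auto simp: in_hom)

lemma plus_assoc[simp]:
  assumes "f \<in> mor C" "g \<in> mor C" "h \<in> mor C" "src C g = src C f" "tgt C g = tgt C f"
    "src C h = src C f" "tgt C h = tgt C f"
  shows "plus C (plus C f g) h = plus C f (plus C g h)"
  using h_assoc[OF mor_src[OF assms(1)] mor_tgt[OF assms(1)] hom_self[OF assms(1)], of g h] assms
  by (auto simp: in_hom)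

lemma zer_plus[simp]: "\<lbrakk>f \<in> mor C; src C f = A; tgt C f = B\<rbrakk> \<Longrightarrow> plus C (zer C A B) f = f"
  using h_zp[OF mor_src mor_tgt hom_self] by blast

lemma plus_zer[simp]: "\<lbrakk>f \<in> mor C; src C f = A; tgt C f = B\<rbrakk> \<Longrightarrow> plus C f (zer C A B) = f"
  by (metis mor_src mor_tgt plus_comm zer_plus zer_ty)

lemma plus_neg[simp]: "f \<in> mor C \<Longrightarrow> plus C f (negm C f) = zer C (src C f) (tgt C f)"
  using h_pn[OF mor_src mor_tgt hom_self] by blast

lemma neg_plus[simp]: "f \<in> mor C \<Longrightarrow> plus C (negm C f) f = zer C (src C f) (tgt C f)"
  by (metis neg_ty plus_comm plus_neg)

lemma h_distl: "A \<in> obj C \<Longrightarrow> B \<in> obj C \<Longrightarrow> D \<in> obj C \<Longrightarrow> f \<in> hom C A B \<Longrightarrow> g \<in> hom C A B \<Longrightarrow> h \<in> hom C B D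
   \<Longrightarrow> comp C h (plus C f g) = plus C (comp C h f) (comp C h g)"
  using c7 by blast
lemma h_distr: "A \<in> obj C \<Longrightarrow> B \<in> obj C \<Longrightarrow> D \<in> obj C \<Longrightarrow> h \<in> hom C A B \<Longrightarrow> f \<in> hom C B D \<Longrightarrow> g \<in> hom C B D
   \<Longrightarrow> comp C (plus C f g) h = plus C (comp C f h) (comp C g h)"
  using c8 by blast

lemma distl:
  "\<lbrakk>f \<in> mor C; g \<in> mor C; h \<in> mor C; src C g = src C f; tgt C g = tgt C f; tgt C f = src C h\<rbrakk>
   \<Longrightarrow> comp C h (plus C f g) = plus C (comp C h f) (comp C h g)"
  by (rule h_distl[of "src C f" "tgt C f" "tgt C h"]) (auto simp: in_hom)

lemma distr:
  "\<lbrakk>f \<in> mor C; g \<in> mor C; h \<in> mor C; src C g = src C f; tgt C g = tgt C f; tgt C h = src C f\<rbrakk>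
   \<Longrightarrow> comp C (plus C f g) h = plus C (comp C f h) (comp C g h)"
  by (rule h_distr[of "src C h" "src C f" "tgt C f"]) (auto simp: in_hom)

lemma idem_zer: assumes "x \<in> mor C" "plus C x x = x" shows "x = zer C (src C x) (tgt C x)"
proof -
  have "x = plus C x (zer C (src C x) (tgt C x))" using assms by simp
  also have "\<dots> = plus C x (plus C x (negm C x))" using assms by simp
  also have "\<dots> = plus C (plus C x x) (negm C x)" using assms by (subst plus_assoc) auto
  also have "\<dots> = plus C x (negm C x)" using assms by simp
  also have "\<dots> = zer C (src C x) (tgt C x)" using assms by simp
  finally show ?thesis .
qed

lemma neg_unique: assumes "a \<in> mor C" "b \<in> mor C" "src C b = src C a" "tgt C b = tgt C a"
  "plus C a b = zer C (src C a) (tgt C a)" shows "b = negm C a"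
proof -
  have "b = plus C (zer C (src C a) (tgt C a)) b" using assms by simp
  also have "\<dots> = plus C (plus C (negm C a) a) b" using assms by simp
  also have "\<dots> = plus C (negm C a) (plus C a b)" using assms by (subst plus_assoc) auto
  also have "\<dots> = plus C (negm C a) (zer C (src C a) (tgt C a))" using assms by simp
  also have "\<dots> = negm C a" using assms by simp
  finally show ?thesis .
qed

lemma comp_zer_right[simp]: assumes "h \<in> mor C" "src C h = B" "A \<in> obj C"
  shows "comp C h (zer C A B) = zer C A (tgt C h)"
proof -
  have B: "B \<in> obj C" using assms by auto
  let ?x = "comp C h (zer C A B)"
  have x: "?x \<in> mor C" "src C ?x = A" "tgt C ?x = tgt C h" using assms B by auto
  have "?x = comp C h (plus C (zer C A B) (zer C A B))" using assms B by simp
  also have "\<dots> = plus C ?x ?x"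
    using assms B by (intro distl) auto
  finally have "?x = zer C (src C ?x) (tgt C ?x)"
    using idem_zer x by metis
  then show ?thesis using x by simp
qed

lemma comp_zer_left[simp]: assumes "g \<in> mor C" "tgt C g = B" "D \<in> obj C"
  shows "comp C (zer C B D) g = zer C (src C g) D"
proof -
  have B: "B \<in> obj C" using assms by auto
  let ?x = "comp C (zer C B D) g"
  have x: "?x \<in> mor C" "src C ?x = src C g" "tgt C ?x = D" using assms B by auto
  have "?x = comp C (plus C (zer C B D) (zer C B D)) g" using assms B by simp
  also have "\<dots> = plus C ?x ?x"
    using assms B by (intro distr) auto
  finally have "?x = zer C (src C ?x) (tgt C ?x)"
    using idem_zer x by metis
  then show ?thesis using x by simp
qed

lemma neg_neg[simp]: "f \<in> mor C \<Longrightarrow> negm C (negm C f) = f"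
  by (metis neg_plus neg_ty neg_unique)

lemma comp_neg_right[simp]: assumes "f \<in> mor C" "h \<in> mor C" "tgt C f = src C h"
  shows "comp C h (negm C f) = negm C (comp C h f)"
proof (rule neg_unique)
  show "plus C (comp C h f) (comp C h (negm C f)) = zer C (src C (comp C h f)) (tgt C (comp C h f))"
    using assms by (simp add: distl[symmetric])
qed (use assms in auto)

lemma comp_neg_left[simp]: assumes "f \<in> mor C" "h \<in> mor C" "tgt C f = src C h"
  shows "comp C (negm C h) f = negm C (comp C h f)"
proof (rule neg_unique)
  show "plus C (comp C h f) (comp C (negm C h) f) = zer C (src C (comp C h f)) (tgt C (comp C h f))"
    using assms by (simp add: distr[symmetric])
qed (use assms in auto)

lemma neg_zer[simp]: "A \<in> obj C \<Longrightarrow> B \<in> obj C \<Longrightarrow> negm C (zer C A B) = zer C A B"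
  by (metis neg_plus neg_ty(1,2,3) plus_zer zer_ty(1,2,3))

lemma neg_of_plus: assumes "f \<in> mor C" "g \<in> mor C" "src C g = src C f" "tgt C g = tgt C f"
  shows "negm C (plus C f g) = plus C (negm C f) (negm C g)"
proof -
  have "plus C (plus C f g) (plus C (negm C f) (negm C g)) = zer C (src C f) (tgt C f)"
  proof -
    have "plus C (plus C f g) (plus C (negm C f) (negm C g)) = plus C f (plus C g (plus C (negm C f) (negm C g)))"
      using assms by simp
    also have "plus C g (plus C (negm C f) (negm C g)) = plus C (negm C f) (plus C g (negm C g))"
      using assms by (metis neg_ty plus_assoc plus_comm)
    finally show ?thesis using assms by simp
  qed
  then show ?thesis using assms by (metis neg_unique neg_ty plus_ty)
qed

lemma L1: assumes "a \<in> mor C" "b \<in> mor C" "src C b = src C a" "tgt C b = tgt C a"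
  shows "plus C a (negm C (plus C a (negm C b))) = b"
proof -
  have "plus C a (negm C (plus C a (negm C b))) = plus C a (plus C (negm C a) b)"
    using assms by (simp add: neg_of_plus)
  also have "\<dots> = b" using assms by (simp flip: plus_assoc)
  finally show ?thesis .
qed

lemma L2: assumes "a \<in> mor C" "b \<in> mor C" "src C b = src C a" "tgt C b = tgt C a"
  shows "plus C (plus C a (negm C b)) b = a"
  using assms by simp

lemma L3: assumes "a \<in> mor C" "b \<in> mor C" "src C b = src C a" "tgt C b = tgt C a"
  "plus C a b = zer C (src C a) (tgt C a)"
  shows "b = negm C a" "a = negm C b"
  using assms neg_unique apply blast
  using assms by (metis neg_neg neg_unique)

end


context AC begin

lemma bs_all: assumes "A \<in> obj C" "B \<in> obj C"
  shows "bsum C A B \<in> obj C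
        \<and> inj1 C A B \<in> hom C A (bsum C A B) \<and> inj2 C A B \<in> hom C B (bsum C A B)
        \<and> prj1 C A B \<in> hom C (bsum C A B) A \<and> prj2 C A B \<in> hom C (bsum C A B) B
        \<and> comp C (prj1 C A B) (inj1 C A B) = ident C A
        \<and> comp C (prj2 C A B) (inj2 C A B) = ident C B
        \<and> comp C (prj1 C A B) (inj2 C A B) = zer C B A
        \<and> comp C (prj2 C A B) (inj1 C A B) = zer C A B
        \<and> plus C (comp C (inj1 C A B) (prj1 C A B)) (comp C (inj2 C A B) (prj2 C A B))
            = ident C (bsum C A B)"
  using c10 assms by blast

lemma bs_ty[simp]: assumes "A \<in> obj C" "B \<in> obj C"
  shows "bsum C A B \<in> obj C"
    "inj1 C A B \<in> mor C" "src C (inj1 C A B) = A" "tgt C (inj1 C A B) = bsum C A B"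
    "inj2 C A B \<in> mor C" "src C (inj2 C A B) = B" "tgt C (inj2 C A B) = bsum C A B"
    "prj1 C A B \<in> mor C" "tgt C (prj1 C A B) = A" "src C (prj1 C A B) = bsum C A B"
    "prj2 C A B \<in> mor C" "tgt C (prj2 C A B) = B" "src C (prj2 C A B) = bsum C A B"
  using bs_all[OF assms] by (auto simp: in_hom)

lemma bs_eq[simp]: assumes "A \<in> obj C" "B \<in> obj C"
  shows "comp C (prj1 C A B) (inj1 C A B) = ident C A"
        "comp C (prj2 C A B) (inj2 C A B) = ident C B"
        "comp C (prj1 C A B) (inj2 C A B) = zer C B A"
        "comp C (prj2 C A B) (inj1 C A B) = zer C A B"
  using bs_all[OF assms] by auto

lemma bs_split: assumes "A \<in> obj C" "B \<in> obj C"
  shows "plus C (comp C (inj1 C A B) (prj1 C A B)) (comp C (inj2 C A B) (prj2 C A B)) = ident C (bsum C A B)"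
  using bs_all[OF assms] by auto

lemma bs_eq'[simp]: assumes "A \<in> obj C" "B \<in> obj C" "x \<in> mor C"
  shows "tgt C x = A \<Longrightarrow> comp C (prj1 C A B) (comp C (inj1 C A B) x) = x"
        "tgt C x = B \<Longrightarrow> comp C (prj2 C A B) (comp C (inj2 C A B) x) = x"
        "tgt C x = B \<Longrightarrow> comp C (prj1 C A B) (comp C (inj2 C A B) x) = zer C (src C x) A"
        "tgt C x = A \<Longrightarrow> comp C (prj2 C A B) (comp C (inj1 C A B) x) = zer C (src C x) B"
  using assms by (simp_all flip: assoc)

lemma split_ins: assumes "A \<in> obj C" "B \<in> obj C" "x \<in> mor C" "tgt C x = bsum C A B"
  shows "x = plus C (comp C (inj1 C A B) (comp C (prj1 C A B) x)) (comp C (inj2 C A B) (comp C (prj2 C A B) x))"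
proof -
  have "x = comp C (ident C (bsum C A B)) x" using assms by simp
  also have "\<dots> = comp C (plus C (comp C (inj1 C A B) (prj1 C A B)) (comp C (inj2 C A B) (prj2 C A B))) x"
    using bs_split[OF assms(1,2)] by simp
  also have "\<dots> = plus C (comp C (comp C (inj1 C A B) (prj1 C A B)) x) (comp C (comp C (inj2 C A B) (prj2 C A B)) x)"
    using assms by (intro distr) auto
  also have "\<dots> = plus C (comp C (inj1 C A B) (comp C (prj1 C A B) x)) (comp C (inj2 C A B) (comp C (prj2 C A B) x))"
    using assms by simp
  finally show ?thesis .
qed

lemma bmat_ty[simp]:
  assumes "A1 \<in> obj C" "A2 \<in> obj C" "B1 \<in> obj C" "B2 \<in> obj C"
    "m11 \<in> hom C A1 B1" "m12 \<in> hom C A2 B1" "m21 \<in> hom C A1 B2" "m22 \<in> hom C A2 B2"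
  shows "bmat C A1 A2 B1 B2 m11 m12 m21 m22 \<in> mor C"
    "src C (bmat C A1 A2 B1 B2 m11 m12 m21 m22) = bsum C A1 A2"
    "tgt C (bmat C A1 A2 B1 B2 m11 m12 m21 m22) = bsum C B1 B2"
  using assms by (auto simp: bmat_def in_hom)

end


context AC begin

lemma bmat_entries:
  assumes "A1 \<in> obj C" "A2 \<in> obj C" "B1 \<in> obj C" "B2 \<in> obj C"
    "m11 \<in> hom C A1 B1" "m12 \<in> hom C A2 B1" "m21 \<in> hom C A1 B2" "m22 \<in> hom C A2 B2"
    "Z \<in> mor C"
  shows "tgt C Z = A1 \<Longrightarrow> comp C (prj1 C B1 B2) (comp C (bmat C A1 A2 B1 B2 m11 m12 m21 m22) (comp C (inj1 C A1 A2) Z)) = comp C m11 Z"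
    "tgt C Z = A2 \<Longrightarrow> comp C (prj1 C B1 B2) (comp C (bmat C A1 A2 B1 B2 m11 m12 m21 m22) (comp C (inj2 C A1 A2) Z)) = comp C m12 Z"
    "tgt C Z = A1 \<Longrightarrow> comp C (prj2 C B1 B2) (comp C (bmat C A1 A2 B1 B2 m11 m12 m21 m22) (comp C (inj1 C A1 A2) Z)) = comp C m21 Z"
    "tgt C Z = A2 \<Longrightarrow> comp C (prj2 C B1 B2) (comp C (bmat C A1 A2 B1 B2 m11 m12 m21 m22) (comp C (inj2 C A1 A2) Z)) = comp C m22 Z"
  using assms unfolding in_hom by (simp_all add: bmat_def distl distr)

lemma bmat_entries0:
  assumes "A1 \<in> obj C" "A2 \<in> obj C" "B1 \<in> obj C" "B2 \<in> obj C"
    "m11 \<in> hom C A1 B1" "m12 \<in> hom C A2 B1" "m21 \<in> hom C A1 B2" "m22 \<in> hom C A2 B2"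
  shows "comp C (prj1 C B1 B2) (comp C (bmat C A1 A2 B1 B2 m11 m12 m21 m22) (inj1 C A1 A2)) = m11"
    "comp C (prj1 C B1 B2) (comp C (bmat C A1 A2 B1 B2 m11 m12 m21 m22) (inj2 C A1 A2)) = m12"
    "comp C (prj2 C B1 B2) (comp C (bmat C A1 A2 B1 B2 m11 m12 m21 m22) (inj1 C A1 A2)) = m21"
    "comp C (prj2 C B1 B2) (comp C (bmat C A1 A2 B1 B2 m11 m12 m21 m22) (inj2 C A1 A2)) = m22"
  using bmat_entries[OF assms, of "ident C A1"] bmat_entries[OF assms, of "ident C A2"] assms
  unfolding in_hom by simp_all

lemma decomp:
  assumes "A1 \<in> obj C" "A2 \<in> obj C" "B1 \<in> obj C" "B2 \<in> obj C"
    "u \<in> mor C" "src C u = bsum C A1 A2" "tgt C u = bsum C B1 B2"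
  shows "u = bmat C A1 A2 B1 B2 (comp C (prj1 C B1 B2) (comp C u (inj1 C A1 A2)))
     (comp C (prj1 C B1 B2) (comp C u (inj2 C A1 A2)))
     (comp C (prj2 C B1 B2) (comp C u (inj1 C A1 A2)))
     (comp C (prj2 C B1 B2) (comp C u (inj2 C A1 A2)))"
proof -
  let ?P1 = "comp C (inj1 C B1 B2) (prj1 C B1 B2)"
  let ?P2 = "comp C (inj2 C B1 B2) (prj2 C B1 B2)"
  let ?Q1 = "comp C (inj1 C A1 A2) (prj1 C A1 A2)"
  let ?Q2 = "comp C (inj2 C A1 A2) (prj2 C A1 A2)"
  have "u = comp C (ident C (bsum C B1 B2)) (comp C u (ident C (bsum C A1 A2)))"
    using assms by simp
  also have "\<dots> = comp C (plus C ?P1 ?P2) (comp C u (plus C ?Q1 ?Q2))"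
    using bs_split assms by simp
  also have "\<dots> = comp C (plus C ?P1 ?P2) (plus C (comp C u ?Q1) (comp C u ?Q2))"
    using assms by (subst distl) auto
  also have "\<dots> = plus C (comp C ?P1 (plus C (comp C u ?Q1) (comp C u ?Q2))) (comp C ?P2 (plus C (comp C u ?Q1) (comp C u ?Q2)))"
    using assms by (subst distr) auto
  also have "\<dots> = plus C (plus C (comp C ?P1 (comp C u ?Q1)) (comp C ?P1 (comp C u ?Q2)))
        (plus C (comp C ?P2 (comp C u ?Q1)) (comp C ?P2 (comp C u ?Q2)))"
    using assms by (subst (1 2) distl) auto
  also have "\<dots> = bmat C A1 A2 B1 B2 (comp C (prj1 C B1 B2) (comp C u (inj1 C A1 A2)))
     (comp C (prj1 C B1 B2) (comp C u (inj2 C A1 A2)))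
     (comp C (prj2 C B1 B2) (comp C u (inj1 C A1 A2)))
     (comp C (prj2 C B1 B2) (comp C u (inj2 C A1 A2)))"
    using assms by (simp add: bmat_def)
  finally show ?thesis .
qed

lemma bmat_ext:
  assumes "A1 \<in> obj C" "A2 \<in> obj C" "B1 \<in> obj C" "B2 \<in> obj C"
    "u \<in> mor C" "src C u = bsum C A1 A2" "tgt C u = bsum C B1 B2"
    "v \<in> mor C" "src C v = bsum C A1 A2" "tgt C v = bsum C B1 B2"
    "comp C (prj1 C B1 B2) (comp C u (inj1 C A1 A2)) = comp C (prj1 C B1 B2) (comp C v (inj1 C A1 A2))"
    "comp C (prj1 C B1 B2) (comp C u (inj2 C A1 A2)) = comp C (prj1 C B1 B2) (comp C v (inj2 C A1 A2))"
    "comp C (prj2 C B1 B2) (comp C u (inj1 C A1 A2)) = comp C (prj2 C B1 B2) (comp C v (inj1 C A1 A2))"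
    "comp C (prj2 C B1 B2) (comp C u (inj2 C A1 A2)) = comp C (prj2 C B1 B2) (comp C v (inj2 C A1 A2))"
  shows "u = v"
  using decomp[OF assms(1-7)] decomp[OF assms(1-4,8-10)] assms(11-14) by metis

lemma comp_entry:
  assumes "B1 \<in> obj C" "B2 \<in> obj C" "N \<in> mor C" "src C N = bsum C B1 B2" "P \<in> mor C" "src C P = tgt C N"
    "W \<in> mor C" "tgt C W = bsum C B1 B2"
  shows "comp C P (comp C N W) = plus C (comp C P (comp C N (comp C (inj1 C B1 B2) (comp C (prj1 C B1 B2) W))))
     (comp C P (comp C N (comp C (inj2 C B1 B2) (comp C (prj2 C B1 B2) W))))"
proof -
  have e: "W = plus C (comp C (inj1 C B1 B2) (comp C (prj1 C B1 B2) W)) (comp C (inj2 C B1 B2) (comp C (prj2 C B1 B2) W))"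
    using split_ins assms by blast
  have "comp C P (comp C N W) = comp C P (comp C N (plus C (comp C (inj1 C B1 B2) (comp C (prj1 C B1 B2) W)) (comp C (inj2 C B1 B2) (comp C (prj2 C B1 B2) W))))"
    using e by (rule arg_cong[where f="\<lambda>x. comp C P (comp C N x)"])
  also have "\<dots> = plus C (comp C P (comp C N (comp C (inj1 C B1 B2) (comp C (prj1 C B1 B2) W))))
     (comp C P (comp C N (comp C (inj2 C B1 B2) (comp C (prj2 C B1 B2) W))))"
    using assms by (simp add: distl)
  finally show ?thesis .
qed

lemma bmat_comp:
  assumes "A1 \<in> obj C" "A2 \<in> obj C" "B1 \<in> obj C" "B2 \<in> obj C" "D1 \<in> obj C" "D2 \<in> obj C"
    "m11 \<in> hom C A1 B1" "m12 \<in> hom C A2 B1" "m21 \<in> hom C A1 B2" "m22 \<in> hom C A2 B2"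
    "n11 \<in> hom C B1 D1" "n12 \<in> hom C B2 D1" "n21 \<in> hom C B1 D2" "n22 \<in> hom C B2 D2"
  shows "comp C (bmat C B1 B2 D1 D2 n11 n12 n21 n22) (bmat C A1 A2 B1 B2 m11 m12 m21 m22)
    = bmat C A1 A2 D1 D2 (plus C (comp C n11 m11) (comp C n12 m21)) (plus C (comp C n11 m12) (comp C n12 m22))
        (plus C (comp C n21 m11) (comp C n22 m21)) (plus C (comp C n21 m12) (comp C n22 m22))"
    (is "comp C ?N ?M = ?R")
proof -
  have hN: "?N \<in> mor C" "src C ?N = bsum C B1 B2" "tgt C ?N = bsum C D1 D2"
    using assms by auto
  have hM: "?M \<in> mor C" "src C ?M = bsum C A1 A2" "tgt C ?M = bsum C B1 B2"
    using assms by auto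
  have R: "?R \<in> mor C" "src C ?R = bsum C A1 A2" "tgt C ?R = bsum C D1 D2"
    using assms unfolding in_hom by (auto intro!: bmat_ty simp: in_hom)
  note eM = bmat_entries0[OF assms(1-4,7-10)]
  note eN = bmat_entries[OF assms(3-6,11-14)]
  note eR = bmat_entries0[OF assms(1,2,5,6)]
  have NM: "comp C ?N ?M \<in> mor C" "src C (comp C ?N ?M) = bsum C A1 A2" "tgt C (comp C ?N ?M) = bsum C D1 D2"
    using hN hM by auto
  have a': "m11 \<in> mor C \<and> src C m11 = A1 \<and> tgt C m11 = B1" "m12 \<in> mor C \<and> src C m12 = A2 \<and> tgt C m12 = B1"
    "m21 \<in> mor C \<and> src C m21 = A1 \<and> tgt C m21 = B2" "m22 \<in> mor C \<and> src C m22 = A2 \<and> tgt C m22 = B2"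
    "n11 \<in> mor C \<and> src C n11 = B1 \<and> tgt C n11 = D1" "n12 \<in> mor C \<and> src C n12 = B2 \<and> tgt C n12 = D1"
    "n21 \<in> mor C \<and> src C n21 = B1 \<and> tgt C n21 = D2" "n22 \<in> mor C \<and> src C n22 = B2 \<and> tgt C n22 = D2"
    using assms by (auto simp: in_hom)
  show ?thesis
  proof (rule bmat_ext[OF assms(1,2,5,6) NM R])
    have "comp C (prj1 C D1 D2) (comp C (comp C ?N ?M) (inj1 C A1 A2)) = comp C (prj1 C D1 D2) (comp C ?N (comp C ?M (inj1 C A1 A2)))"
      using hN hM assms by simp
    also have "\<dots> = plus C (comp C (prj1 C D1 D2) (comp C ?N (comp C (inj1 C B1 B2) (comp C (prj1 C B1 B2) (comp C ?M (inj1 C A1 A2))))))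
     (comp C (prj1 C D1 D2) (comp C ?N (comp C (inj2 C B1 B2) (comp C (prj2 C B1 B2) (comp C ?M (inj1 C A1 A2))))))"
      using hN hM assms by (intro comp_entry) auto
    also have "\<dots> = comp C (prj1 C D1 D2) (comp C ?R (inj1 C A1 A2))"
      using a' assms by (simp add: eN eM eR in_hom)
    finally show "comp C (prj1 C D1 D2) (comp C (comp C ?N ?M) (inj1 C A1 A2)) = comp C (prj1 C D1 D2) (comp C ?R (inj1 C A1 A2))" .
    have "comp C (prj1 C D1 D2) (comp C (comp C ?N ?M) (inj2 C A1 A2)) = comp C (prj1 C D1 D2) (comp C ?N (comp C ?M (inj2 C A1 A2)))"
      using hN hM assms by simp
    also have "\<dots> = plus C (comp C (prj1 C D1 D2) (comp C ?N (comp C (inj1 C B1 B2) (comp C (prj1 C B1 B2) (comp C ?M (inj2 C A1 A2))))))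
     (comp C (prj1 C D1 D2) (comp C ?N (comp C (inj2 C B1 B2) (comp C (prj2 C B1 B2) (comp C ?M (inj2 C A1 A2))))))"
      using hN hM assms by (intro comp_entry) auto
    also have "\<dots> = comp C (prj1 C D1 D2) (comp C ?R (inj2 C A1 A2))"
      using a' assms by (simp add: eN eM eR in_hom)
    finally show "comp C (prj1 C D1 D2) (comp C (comp C ?N ?M) (inj2 C A1 A2)) = comp C (prj1 C D1 D2) (comp C ?R (inj2 C A1 A2))" .
    have "comp C (prj2 C D1 D2) (comp C (comp C ?N ?M) (inj1 C A1 A2)) = comp C (prj2 C D1 D2) (comp C ?N (comp C ?M (inj1 C A1 A2)))"
      using hN hM assms by simp
    also have "\<dots> = plus C (comp C (prj2 C D1 D2) (comp C ?N (comp C (inj1 C B1 B2) (comp C (prj1 C B1 B2) (comp C ?M (inj1 C A1 A2))))))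
     (comp C (prj2 C D1 D2) (comp C ?N (comp C (inj2 C B1 B2) (comp C (prj2 C B1 B2) (comp C ?M (inj1 C A1 A2))))))"
      using hN hM assms by (intro comp_entry) auto
    also have "\<dots> = comp C (prj2 C D1 D2) (comp C ?R (inj1 C A1 A2))"
      using a' assms by (simp add: eN eM eR in_hom)
    finally show "comp C (prj2 C D1 D2) (comp C (comp C ?N ?M) (inj1 C A1 A2)) = comp C (prj2 C D1 D2) (comp C ?R (inj1 C A1 A2))" .
    have "comp C (prj2 C D1 D2) (comp C (comp C ?N ?M) (inj2 C A1 A2)) = comp C (prj2 C D1 D2) (comp C ?N (comp C ?M (inj2 C A1 A2)))"
      using hN hM assms by simp
    also have "\<dots> = plus C (comp C (prj2 C D1 D2) (comp C ?N (comp C (inj1 C B1 B2) (comp C (prj1 C B1 B2) (comp C ?M (inj2 C A1 A2))))))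
     (comp C (prj2 C D1 D2) (comp C ?N (comp C (inj2 C B1 B2) (comp C (prj2 C B1 B2) (comp C ?M (inj2 C A1 A2))))))"
      using hN hM assms by (intro comp_entry) auto
    also have "\<dots> = comp C (prj2 C D1 D2) (comp C ?R (inj2 C A1 A2))"
      using a' assms by (simp add: eN eM eR in_hom)
    finally show "comp C (prj2 C D1 D2) (comp C (comp C ?N ?M) (inj2 C A1 A2)) = comp C (prj2 C D1 D2) (comp C ?R (inj2 C A1 A2))" .
  qed
qed

lemma bmat_id:
  assumes "A1 \<in> obj C" "A2 \<in> obj C"
  shows "bmat C A1 A2 A1 A2 (ident C A1) (zer C A2 A1) (zer C A1 A2) (ident C A2) = ident C (bsum C A1 A2)"
  using assms bs_split[OF assms] by (simp add: bmat_def)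

end



lemma two_comm: "2 + (n::int) = n + 2" by simp

context AC begin

lemma eps_ty[simp]: "A \<in> obj C \<Longrightarrow> eps C k A \<in> mor C"
  "A \<in> obj C \<Longrightarrow> src C (eps C k A) = A" "A \<in> obj C \<Longrightarrow> tgt C (eps C k A) = A"
  by (auto simp: eps_def)

lemma bmat_cong: "a = a' \<Longrightarrow> b = b' \<Longrightarrow> c = c' \<Longrightarrow> e = e' \<Longrightarrow>
  bmat C A1 A2 B1 B2 a b c e = bmat C A1 A2 B1 B2 a' b' c' e'" by simp

lemma fun_obj: "additive_functor C Fo Fm \<Longrightarrow> A \<in> obj C \<Longrightarrow> Fo A \<in> obj C"
  unfolding additive_functor_def by blast
lemma fun_ty: assumes "additive_functor C Fo Fm" "f \<in> mor C"
  shows "Fm f \<in> mor C" "src C (Fm f) = Fo (src C f)" "tgt C (Fm f) = Fo (tgt C f)"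
  using assms unfolding additive_functor_def in_hom by blast+
lemma fun_id: "additive_functor C Fo Fm \<Longrightarrow> A \<in> obj C \<Longrightarrow> Fm (ident C A) = ident C (Fo A)"
  unfolding additive_functor_def by blast
lemma fun_comp: "additive_functor C Fo Fm \<Longrightarrow> f \<in> mor C \<Longrightarrow> g \<in> mor C \<Longrightarrow> tgt C f = src C g \<Longrightarrow>
  Fm (comp C g f) = comp C (Fm g) (Fm f)"
  unfolding additive_functor_def by blast
lemma fun_plus: assumes "additive_functor C Fo Fm" "f \<in> mor C" "g \<in> mor C" "src C g = src C f" "tgt C g = tgt C f"
  shows "Fm (plus C f g) = plus C (Fm f) (Fm g)"
proof -
  have "\<forall>A\<in>obj C. \<forall>B\<in>obj C. \<forall>f\<in>hom C A B. \<forall>g\<in>hom C A B. Fm (plus C f g) = plus C (Fm f) (Fm g)"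
    using assms(1) unfolding additive_functor_def by blast
  from this[rule_format, of "src C f" "tgt C f" f g] show ?thesis using assms(2-5) by (simp add: in_hom)
qed
lemma fun_zer: assumes "additive_functor C Fo Fm" "A \<in> obj C" "B \<in> obj C"
  shows "Fm (zer C A B) = zer C (Fo A) (Fo B)"
proof -
  let ?x = "Fm (zer C A B)"
  have x: "?x \<in> mor C" "src C ?x = Fo A" "tgt C ?x = Fo B" using fun_ty[OF assms(1), of "zer C A B"] assms by auto
  have "?x = Fm (plus C (zer C A B) (zer C A B))" using assms by simp
  also have "\<dots> = plus C ?x ?x" using assms by (intro fun_plus) auto
  finally have "?x = zer C (src C ?x) (tgt C ?x)" using idem_zer x by metis
  then show ?thesis using x by simp
qed
lemma fun_neg: assumes "additive_functor C Fo Fm" "f \<in> mor C"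
  shows "Fm (negm C f) = negm C (Fm f)"
proof (rule neg_unique)
  show "plus C (Fm f) (Fm (negm C f)) = zer C (src C (Fm f)) (tgt C (Fm f))"
    using assms by (simp add: fun_plus[symmetric] fun_zer fun_ty)
qed (use assms fun_ty[OF assms(1)] in auto)

end

locale M = AC C for C :: "('o,'m) addcat" +
  fixes Fo Go :: "'o \<Rightarrow> 'o" and Fm Gm bar bd :: "'m \<Rightarrow> 'm" and f :: "'o \<Rightarrow> 'm"
  assumes FF: "additive_functor C Fo Fm"
    and GG: "additive_functor C Go Gm"
    and BB: "involutive_bar C bar"
    and NT: "nat_trans C Fo Fm Go Gm f"
    and BD: "boundary_op C Fo Fm Go Gm bar f bd"
begin

lemma BF: "additive_functor C (\<lambda>A. A) bar" using BB unfolding involutive_bar_def by blast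

lemma Fo_obj[simp]: "A \<in> obj C \<Longrightarrow> Fo A \<in> obj C" using fun_obj[OF FF] .
lemma Go_obj[simp]: "A \<in> obj C \<Longrightarrow> Go A \<in> obj C" using fun_obj[OF GG] .
lemma Fm_ty[simp]: "g \<in> mor C \<Longrightarrow> Fm g \<in> mor C" "g \<in> mor C \<Longrightarrow> src C (Fm g) = Fo (src C g)"
   "g \<in> mor C \<Longrightarrow> tgt C (Fm g) = Fo (tgt C g)" using fun_ty[OF FF] by auto
lemma Gm_ty[simp]: "g \<in> mor C \<Longrightarrow> Gm g \<in> mor C" "g \<in> mor C \<Longrightarrow> src C (Gm g) = Go (src C g)"
   "g \<in> mor C \<Longrightarrow> tgt C (Gm g) = Go (tgt C g)" using fun_ty[OF GG] by auto
lemma bar_ty[simp]: "g \<in> mor C \<Longrightarrow> bar g \<in> mor C" "g \<in> mor C \<Longrightarrow> src C (bar g) = src C g"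
   "g \<in> mor C \<Longrightarrow> tgt C (bar g) = tgt C g" using fun_ty[OF BF] by auto
lemma f_ty[simp]: "A \<in> obj C \<Longrightarrow> f A \<in> mor C" "A \<in> obj C \<Longrightarrow> src C (f A) = Fo A"
   "A \<in> obj C \<Longrightarrow> tgt C (f A) = Go A" using NT unfolding nat_trans_def in_hom by auto
lemma bd_ty[simp]: "g \<in> mor C \<Longrightarrow> bd g \<in> mor C" "g \<in> mor C \<Longrightarrow> src C (bd g) = Go (src C g)"
   "g \<in> mor C \<Longrightarrow> tgt C (bd g) = Fo (tgt C g)" using BD unfolding boundary_op_def in_hom by auto

lemma bd_G: "g \<in> mor C \<Longrightarrow> Gm (subm C g (bar g)) = comp C (f (tgt C g)) (bd g)"
  using BD unfolding boundary_op_def by blast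
lemma bd_F: "g \<in> mor C \<Longrightarrow> Fm (subm C g (bar g)) = comp C (bd g) (f (src C g))"
  using BD unfolding boundary_op_def by blast
lemma bd_comp: "g \<in> mor C \<Longrightarrow> h \<in> mor C \<Longrightarrow> tgt C g = src C h \<Longrightarrow>
   bd (comp C h g) = plus C (comp C (bd h) (Gm g)) (comp C (Fm (bar h)) (bd g))"
  using BD unfolding boundary_op_def by blast
lemma bd_lin: "A \<in> obj C \<Longrightarrow> B \<in> obj C \<Longrightarrow> g \<in> hom C A B \<Longrightarrow> h \<in> hom C A B \<Longrightarrow>
   bd (subm C g h) = subm C (bd g) (bd h)"
  using BD unfolding boundary_op_def by blast
lemma bd_zer: assumes "A \<in> obj C" "B \<in> obj C" shows "bd (zer C A B) = zer C (Go A) (Fo B)"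
proof -
  have "bd (zer C A B) = bd (subm C (zer C A B) (zer C A B))"
    using assms by (simp add: subm_def)
  also have "\<dots> = subm C (bd (zer C A B)) (bd (zer C A B))"
    using assms by (intro bd_lin) (auto simp: in_hom)
  also have "\<dots> = zer C (Go A) (Fo B)" using assms by (simp add: subm_def)
  finally show ?thesis .
qed

end


context M begin

lemma eps_sq: "A \<in> obj C \<Longrightarrow> x \<in> mor C \<Longrightarrow> tgt C x = A \<Longrightarrow> comp C (eps C k A) (comp C (eps C k A) x) = x"
  by (simp add: eps_def)

lemma E11: assumes "d1 \<in> mor C" "src C d1 = a1" "tgt C d1 = a2"
  shows "Fm (bar d1) = plus C (Fm d1) (comp C (eps C (n+2) (Fo a2)) (comp C (bd d1) (comp C (f a1) (eps C (n+1) (Fo a1)))))"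
proof -
  have o: "a1 \<in> obj C" "a2 \<in> obj C" using assms by auto
  have key: "comp C (bd d1) (f a1) = plus C (Fm d1) (negm C (Fm (bar d1)))"
    using bd_F[OF assms(1)] assms by (simp add: subm_def fun_plus[OF FF] fun_neg[OF FF])
  have sg: "comp C (eps C (n+2) (Fo a2)) (comp C (bd d1) (comp C (f a1) (eps C (n+1) (Fo a1)))) = negm C (comp C (bd d1) (f a1))"
    using assms o by (cases "even n") (simp_all add: eps_def)
  show ?thesis unfolding sg key using assms by (simp add: L1)
qed

lemma E12: assumes "d0 \<in> mor C" "d1 \<in> mor C" "src C d0 = a0" "tgt C d0 = a1" "src C d1 = a1" "tgt C d1 = a2"
  "comp C d1 d0 = zer C a0 a2"
  shows "comp C (Fm (bar d1)) (comp C (eps C (n+1) (Fo a1)) (bd d0)) = comp C (eps C (n+2) (Fo a2)) (comp C (bd d1) (Gm d0))"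
proof -
  have o: "a0 \<in> obj C" "a1 \<in> obj C" "a2 \<in> obj C" using assms by auto
  have key: "plus C (comp C (bd d1) (Gm d0)) (comp C (Fm (bar d1)) (bd d0)) = zer C (Go a0) (Fo a2)"
    using bd_comp[OF assms(1,2)] assms o by (simp add: bd_zer)
  have t: "comp C (bd d1) (Gm d0) \<in> mor C" "comp C (Fm (bar d1)) (bd d0) \<in> mor C"
    "src C (comp C (bd d1) (Gm d0)) = Go a0" "tgt C (comp C (bd d1) (Gm d0)) = Fo a2"
    "src C (comp C (Fm (bar d1)) (bd d0)) = Go a0" "tgt C (comp C (Fm (bar d1)) (bd d0)) = Fo a2"
    using assms by auto
  note l3 = L3[OF t(1,2) _ _ key[folded t(3,4)]]
  show ?thesis
  proof (cases "even n")
    case True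
    then show ?thesis using assms o l3 t by (simp add: eps_def)
  next
    case False
    then show ?thesis using assms o l3 t by (simp add: eps_def)
  qed
qed

lemma E22: assumes "d0 \<in> mor C" "src C d0 = a0" "tgt C d0 = a1"
  shows "plus C (comp C (f a1) (comp C (eps C (n+1) (Fo a1)) (comp C (eps C (n+1) (Fo a1)) (bd d0)))) (Gm (bar d0)) = Gm d0"
proof -
  have o: "a0 \<in> obj C" "a1 \<in> obj C" using assms by auto
  have key: "comp C (f a1) (bd d0) = plus C (Gm d0) (negm C (Gm (bar d0)))"
    using bd_G[OF assms(1)] assms by (simp add: subm_def fun_plus[OF GG] fun_neg[OF GG])
  show ?thesis using assms o by (simp add: eps_sq key L2)
qed

end


context M begin

lemma step:
  assumes "d0 \<in> mor C" "d1 \<in> mor C" "src C d0 = a0" "tgt C d0 = a1" "src C d1 = a1" "tgt C d1 = a2"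
    "comp C d1 d0 = zer C a0 a2"
  shows "comp C (bmat C (Fo a1) (Go a0) (Fo a2) (Go a1) (Fm (bar d1)) (zer C (Go a0) (Fo a2)) (comp C (f a1) (eps C (n+1) (Fo a1))) (Gm (bar d0)))
               (bmat C (Fo a1) (Go a0) (Fo a1) (Go a0) (ident C (Fo a1)) (comp C (eps C (n+1) (Fo a1)) (bd d0)) (zer C (Fo a1) (Go a0)) (ident C (Go a0)))
       = comp C (bmat C (Fo a2) (Go a1) (Fo a2) (Go a1) (ident C (Fo a2)) (comp C (eps C (n+2) (Fo a2)) (bd d1)) (zer C (Fo a2) (Go a1)) (ident C (Go a1)))
              (bmat C (Fo a1) (Go a0) (Fo a2) (Go a1) (Fm d1) (zer C (Go a0) (Fo a2)) (comp C (f a1) (eps C (n+1) (Fo a1))) (Gm d0))"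
proof -
  have o: "a0 \<in> obj C" "a1 \<in> obj C" "a2 \<in> obj C" using assms by auto
  have oo: "Fo a0 \<in> obj C" "Fo a1 \<in> obj C" "Fo a2 \<in> obj C" "Go a0 \<in> obj C" "Go a1 \<in> obj C" "Go a2 \<in> obj C"
    using o by auto
  have h: "ident C (Fo a1) \<in> hom C (Fo a1) (Fo a1)"
    "comp C (eps C (n+1) (Fo a1)) (bd d0) \<in> hom C (Go a0) (Fo a1)"
    "zer C (Fo a1) (Go a0) \<in> hom C (Fo a1) (Go a0)"
    "ident C (Go a0) \<in> hom C (Go a0) (Go a0)"
    "Fm (bar d1) \<in> hom C (Fo a1) (Fo a2)"
    "zer C (Go a0) (Fo a2) \<in> hom C (Go a0) (Fo a2)"
    "comp C (f a1) (eps C (n+1) (Fo a1)) \<in> hom C (Fo a1) (Go a1)"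
    "Gm (bar d0) \<in> hom C (Go a0) (Go a1)"
    "Fm d1 \<in> hom C (Fo a1) (Fo a2)"
    "Gm d0 \<in> hom C (Go a0) (Go a1)"
    "ident C (Fo a2) \<in> hom C (Fo a2) (Fo a2)"
    "comp C (eps C (n+2) (Fo a2)) (bd d1) \<in> hom C (Go a1) (Fo a2)"
    "zer C (Fo a2) (Go a1) \<in> hom C (Fo a2) (Go a1)"
    "ident C (Go a1) \<in> hom C (Go a1) (Go a1)"
    using assms o by (auto simp: in_hom)
  note e11 = E11[OF assms(2,5,6), of n]
  note e12 = E12[OF assms, of n]
  note e22 = E22[OF assms(1,3,4), of n]
  show ?thesis
    apply (simp only: bmat_comp[OF oo(2,4,2,4,3,5) h(1-8)] bmat_comp[OF oo(2,4,3,5,3,5) h(9,6,7,10,11-14)])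
    apply (rule bmat_cong)
    using assms o h e11 e12 e22 apply (simp_all add: in_hom)
    done
qed

end


context AC begin

lemma inv_chain_map:
  assumes g: "chain_map C X Y g" and hh: "\<And>n. h n \<in> hom C (fst Y n) (fst X n)"
    and hg: "\<And>n. comp C (h n) (g n) = ident C (fst X n)"
    and gh: "\<And>n. comp C (g n) (h n) = ident C (fst Y n)"
    and dX: "\<And>n. snd X n \<in> hom C (fst X n) (fst X (n+1))"
    and dY: "\<And>n. snd Y n \<in> hom C (fst Y n) (fst Y (n+1))"
  shows "chain_map C Y X h"
  unfolding chain_map_def
proof (intro allI conjI)
  fix n
  show "h n \<in> hom C (fst Y n) (fst X n)" by (rule hh)
  have gg: "\<And>n. g n \<in> hom C (fst X n) (fst Y n)" "\<And>n. comp C (snd Y n) (g n) = comp C (g (n + 1)) (snd X n)"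
    using g unfolding chain_map_def by auto
  note t = gg(1)[unfolded in_hom] hh[unfolded in_hom] dX[unfolded in_hom] dY[unfolded in_hom]
  have "comp C (snd X n) (h n) = comp C (comp C (h (n+1)) (g (n+1))) (comp C (snd X n) (h n))"
    using t hg by simp
  also have "\<dots> = comp C (h (n+1)) (comp C (comp C (g (n+1)) (snd X n)) (h n))"
    using t by simp
  also have "\<dots> = comp C (h (n+1)) (comp C (comp C (snd Y n) (g n)) (h n))"
    using gg(2) by simp
  also have "\<dots> = comp C (h (n+1)) (snd Y n)"
    using t gh by simp
  finally show "comp C (snd X n) (h n) = comp C (h (n + 1)) (snd Y n)" .
qed

lemma unipotent_inv:
  assumes "A1 \<in> obj C" "A2 \<in> obj C" "K \<in> hom C A2 A1"
  shows "comp C (bmat C A1 A2 A1 A2 (ident C A1) (negm C K) (zer C A1 A2) (ident C A2))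
                (bmat C A1 A2 A1 A2 (ident C A1) K (zer C A1 A2) (ident C A2)) = ident C (bsum C A1 A2)"
    "comp C (bmat C A1 A2 A1 A2 (ident C A1) K (zer C A1 A2) (ident C A2))
                (bmat C A1 A2 A1 A2 (ident C A1) (negm C K) (zer C A1 A2) (ident C A2)) = ident C (bsum C A1 A2)"
proof -
  have h: "ident C A1 \<in> hom C A1 A1" "K \<in> hom C A2 A1" "negm C K \<in> hom C A2 A1" "zer C A1 A2 \<in> hom C A1 A2"
    "ident C A2 \<in> hom C A2 A2" using assms by (auto simp: in_hom)
  show "comp C (bmat C A1 A2 A1 A2 (ident C A1) (negm C K) (zer C A1 A2) (ident C A2))
                (bmat C A1 A2 A1 A2 (ident C A1) K (zer C A1 A2) (ident C A2)) = ident C (bsum C A1 A2)"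
    apply (simp only: bmat_comp[OF assms(1,2,1,2,1,2) h(1,2,4,5,1,3,4,5)])
    apply (subst bmat_id[OF assms(1,2), symmetric])
    apply (rule bmat_cong)
    using assms by (auto simp: in_hom)
  show "comp C (bmat C A1 A2 A1 A2 (ident C A1) K (zer C A1 A2) (ident C A2))
                (bmat C A1 A2 A1 A2 (ident C A1) (negm C K) (zer C A1 A2) (ident C A2)) = ident C (bsum C A1 A2)"
    apply (simp only: bmat_comp[OF assms(1,2,1,2,1,2) h(1,3,4,5,1,2,4,5)])
    apply (subst bmat_id[OF assms(1,2), symmetric])
    apply (rule bmat_cong)
    using assms by (auto simp: in_hom)
qed

end


context M begin

lemma main:
  assumes cc: "chain_complex C X"
  shows "cplx_iso C
           (cone C (fun_cplx Fo Fm X) (fun_cplx Go Gm X) (nt_cplx f X))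
           (cone C (fun_cplx Fo Fm (bar_cplx bar X)) (fun_cplx Go Gm (bar_cplx bar X))
                 (nt_cplx f (bar_cplx bar X)))"
    (is "cplx_iso C ?c1 ?c2")
proof -
  define F where "F = fst X"
  define d where "d = snd X"
  have cF: "\<And>n. F n \<in> obj C" and cd: "\<And>n. d n \<in> mor C" "\<And>n. src C (d n) = F n" "\<And>n. tgt C (d n) = F (n+1)"
    and cz: "\<And>n. comp C (d (n+1)) (d n) = zer C (F n) (F (n+2))"
    using cc unfolding chain_complex_def F_def d_def in_hom by auto
  have tgt1: "\<And>n. tgt C (d (n+1)) = F (n+2)" using cd(3) by (simp add: two_comm)
  have f1: "\<And>n. fst ?c1 n = bsum C (Fo (F (n+1))) (Go (F n))"
    by (simp add: cone_def fun_cplx_def F_def)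
  have f2: "\<And>n. fst ?c2 n = bsum C (Fo (F (n+1))) (Go (F n))"
    by (simp add: cone_def fun_cplx_def bar_cplx_def F_def)
  have s1: "\<And>n. snd ?c1 n = bmat C (Fo (F (n+1))) (Go (F n)) (Fo (F (n+2))) (Go (F (n+1)))
       (Fm (d (n+1))) (zer C (Go (F n)) (Fo (F (n+2)))) (comp C (f (F (n+1))) (eps C (n+1) (Fo (F (n+1))))) (Gm (d n))"
    by (simp add: cone_def fun_cplx_def nt_cplx_def F_def d_def)
  have s2: "\<And>n. snd ?c2 n = bmat C (Fo (F (n+1))) (Go (F n)) (Fo (F (n+2))) (Go (F (n+1)))
       (Fm (bar (d (n+1)))) (zer C (Go (F n)) (Fo (F (n+2)))) (comp C (f (F (n+1))) (eps C (n+1) (Fo (F (n+1))))) (Gm (bar (d n)))"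
    by (simp add: cone_def fun_cplx_def nt_cplx_def bar_cplx_def F_def d_def)
  define K where "K = (\<lambda>n. comp C (eps C (n+1) (Fo (F (n+1)))) (bd (d n)))"
  define \<Phi> where "\<Phi> = (\<lambda>n. bmat C (Fo (F (n+1))) (Go (F n)) (Fo (F (n+1))) (Go (F n))
       (ident C (Fo (F (n+1)))) (K n) (zer C (Fo (F (n+1))) (Go (F n))) (ident C (Go (F n))))"
  define \<Psi> where "\<Psi> = (\<lambda>n. bmat C (Fo (F (n+1))) (Go (F n)) (Fo (F (n+1))) (Go (F n))
       (ident C (Fo (F (n+1)))) (negm C (K n)) (zer C (Fo (F (n+1))) (Go (F n))) (ident C (Go (F n))))"
  have Kh: "\<And>n. K n \<in> hom C (Go (F n)) (Fo (F (n+1)))"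
    using cF cd by (simp add: K_def in_hom)
  have Phin: "\<And>n. \<Phi> n = bmat C (Fo (F (n+1))) (Go (F n)) (Fo (F (n+1))) (Go (F n))
       (ident C (Fo (F (n+1)))) (comp C (eps C (n+1) (Fo (F (n+1)))) (bd (d n))) (zer C (Fo (F (n+1))) (Go (F n))) (ident C (Go (F n)))"
    by (simp add: \<Phi>_def K_def)
  have Phisuc: "\<And>n. \<Phi> (n+1) = bmat C (Fo (F (n+2))) (Go (F (n+1))) (Fo (F (n+2))) (Go (F (n+1)))
       (ident C (Fo (F (n+2)))) (comp C (eps C (n+2) (Fo (F (n+2)))) (bd (d (n+1)))) (zer C (Fo (F (n+2))) (Go (F (n+1)))) (ident C (Go (F (n+1))))"
    by (simp add: \<Phi>_def K_def two_comm)
  have objs: "\<And>n. Fo (F n) \<in> obj C" "\<And>n. Go (F n) \<in> obj C" using cF by auto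
  have Phih: "\<And>n. \<Phi> n \<in> hom C (fst ?c1 n) (fst ?c2 n)"
    unfolding f1 f2 \<Phi>_def using Kh cF by (simp add: in_hom)
  have Psih: "\<And>n. \<Psi> n \<in> hom C (fst ?c2 n) (fst ?c1 n)"
    unfolding f1 f2 \<Psi>_def using Kh cF by (simp add: in_hom)
  have d1h: "\<And>n. snd ?c1 n \<in> hom C (fst ?c1 n) (fst ?c1 (n+1))"
    unfolding f1 s1 using cF cd tgt1 by (simp add: in_hom two_comm)
  have d2h: "\<And>n. snd ?c2 n \<in> hom C (fst ?c2 n) (fst ?c2 (n+1))"
    unfolding f2 s2 using cF cd tgt1 by (simp add: in_hom two_comm)
  have cm: "chain_map C ?c1 ?c2 \<Phi>"
    unfolding chain_map_def
  proof (intro allI conjI)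
    fix n
    show "\<Phi> n \<in> hom C (fst ?c1 n) (fst ?c2 n)" by (rule Phih)
    show "comp C (snd ?c2 n) (\<Phi> n) = comp C (\<Phi> (n + 1)) (snd ?c1 n)"
      unfolding s1 s2 Phisuc unfolding Phin
      by (rule step[OF cd(1)[of n] cd(1)[of "n+1"] cd(2)[of n] cd(3)[of n] cd(2)[of "n+1"] tgt1[of n] cz[of n], where n=n])
  qed
  have inv: "\<And>n. comp C (\<Psi> n) (\<Phi> n) = ident C (fst ?c1 n)" "\<And>n. comp C (\<Phi> n) (\<Psi> n) = ident C (fst ?c2 n)"
    unfolding f1 f2 \<Phi>_def \<Psi>_def using unipotent_inv[OF objs(1) objs(2) Kh] by auto
  have cm2: "chain_map C ?c2 ?c1 \<Psi>"
    by (rule inv_chain_map[OF cm Psih inv(1) inv(2) d1h d2h])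
  show ?thesis unfolding cplx_iso_def using cm cm2 inv by blast
qed

end

theorem lemma6p1:
  fixes C :: "('o, 'm) addcat"
    and Fo Go :: "'o \<Rightarrow> 'o" and Fm Gm bar bd :: "'m \<Rightarrow> 'm"
    and f :: "'o \<Rightarrow> 'm" and X :: "('o, 'm) cplx"
  assumes "additive_category C"
    and "additive_functor C Fo Fm"
    and "additive_functor C Go Gm"
    and "involutive_bar C bar"
    and "nat_trans C Fo Fm Go Gm f"
    and "boundary_op C Fo Fm Go Gm bar f bd"
    and "chain_complex C X"
  shows "cplx_iso C
           (cone C (fun_cplx Fo Fm X) (fun_cplx Go Gm X) (nt_cplx f X))
           (cone C (fun_cplx Fo Fm (bar_cplx bar X)) (fun_cplx Go Gm (bar_cplx bar X))
                 (nt_cplx f (bar_cplx bar X)))"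
proof -
  interpret M C Fo Go Fm Gm bar bd f
    using assms(1-6) by (unfold_locales) auto
  show ?thesis using main[OF assms(7)] .
qed



end
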